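(* The rewrite system on LJB-contexts consisting of the three cleaning rules $[I,\Gamma]_V \longrightarrow I,[\Gamma]_V$ (if $FV(I)\cap V=\emptyset$), $[\ ]_V \longrightarrow \emptyset$, and $I\,I \longrightarrow I$ (where $I$ is an item and $\Gamma$ an LJB-context, the rules being applicable anywhere inside a context) is terminating: there is no infinite sequence of rewriting steps.
   Context: Formulas of minimal predicate logic are given by terms $t ::= x \mid f(t_1,\dots,t_n)$ and formulas $A ::= P(t_1,\dots,t_n)\mid A\rightarrow A \mid \forall x\,A$. LJB-contexts and items are defined by mutual induction: an LJB-context is a finite multiset $\{I_1,\dots,I_n\}$ of items; an item is either a formula or an expression $[\Gamma]_V$ where $V$ is a finite set of variables and $\Gamma$ an LJB-context (the variables of $V$ are bound by the bracket). Free variables: $FV(\{I_1,\dots,I_n\})=FV(I_1)\cup\dots\cup FV(I_n)$, $FV(A)$ is the usual set of free variables of a formula, $FV([\Gamma]_V)=FV(\Gamma)\setminus V$. Contexts are multisets, so rewriting is modulo associativity and commutativity of context formation; "$[\ ]_V\longrightarrow\emptyset$" means an item $[\Gamma]_V$ with $\Gamma$ empty may be deleted, and "$I\,I\longrightarrow I$" means two identical items in the same context may be replaced by one. *)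

theory Defs
  imports "HOL-Library.Multiset" "HOL-Library.FSet"
begin

datatype ('v, 'f) trm = Var 'v | Fn 'f "('v, 'f) trm list"

datatype ('v, 'f, 'p) form =
    Pred 'p "('v, 'f) trm list"
  | Imp "('v, 'f, 'p) form" "('v, 'f, 'p) form"
  | All 'v "('v, 'f, 'p) form"

text \<open>Items: a formula, or a bracket [Gamma]_V with Gamma an LJB-context
 (finite multiset of items) and V a finite set of variables.\<close>

datatype ('v, 'f, 'p) item =
    Fm "('v, 'f, 'p) form"
  | Br "('v, 'f, 'p) item multiset" "'v fset"

type_synonym ('v, 'f, 'p) ctx = "('v, 'f, 'p) item multiset"

primrec fv_trm :: "('v, 'f) trm \<Rightarrow> 'v set" where
  "fv_trm (Var x) = {x}"
| "fv_trm (Fn f ts) = \<Union> (set (map fv_trm ts))"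

primrec fv_form :: "('v, 'f, 'p) form \<Rightarrow> 'v set" where
  "fv_form (Pred P ts) = \<Union> (set (map fv_trm ts))"
| "fv_form (Imp A B) = fv_form A \<union> fv_form B"
| "fv_form (All x A) = fv_form A - {x}"

primrec fv_item :: "('v, 'f, 'p) item \<Rightarrow> 'v set" where
  "fv_item (Fm A) = fv_form A"
| "fv_item (Br G V) = \<Union> (set_mset (image_mset fv_item G)) - fset V"

definition fv_ctx :: "('v, 'f, 'p) ctx \<Rightarrow> 'v set" where
  "fv_ctx G = \<Union> (fv_item ` set_mset G)"

text \<open>One cleaning step on LJB-contexts, modulo AC of context formation
 (contexts are multisets), applicable anywhere (also inside brackets).\<close>

inductive clean_step :: "('v, 'f, 'p) ctx \<Rightarrow> ('v, 'f, 'p) ctx \<Rightarrow> bool" where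
  extrude: "fv_item I \<inter> fset V = {} \<Longrightarrow>
     clean_step (add_mset (Br (add_mset I G) V) D) (add_mset I (add_mset (Br G V) D))"
| empty_br: "clean_step (add_mset (Br {#} V) D) D"
| contract: "clean_step (add_mset I (add_mset I D)) (add_mset I D)"
| inside: "clean_step G G' \<Longrightarrow> clean_step (add_mset (Br G V) D) (add_mset (Br G' V) D)"

end

theory Submission
  imports Defs
begin

primrec wt :: "('v, 'f, 'p) item \<Rightarrow> nat" where
  "wt (Fm A) = 1"
| "wt (Br G V) = 3 ^ (sum_mset (image_mset wt G))"

definition W :: "('v, 'f, 'p) ctx \<Rightarrow> nat" where
  "W G = sum_mset (image_mset wt G)"

lemma wt_pos: "wt I \<ge> 1"
  by (cases I) auto

lemma lt3: "(n::nat) < 3 ^ n"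
  by (induction n) auto

lemma ge3: "(n::nat) \<ge> 1 \<Longrightarrow> 3 \<le> (3::nat) ^ n"
proof (induction n)
  case (Suc n) then show ?case by (cases n) auto
qed simp

lemma key: "(a::nat) \<ge> 1 \<Longrightarrow> a + 3 ^ b < 3 ^ (a + b)"
proof (cases "b = 0")
  case True
  assume a: "a \<ge> 1"
  obtain c where c: "a = Suc c" using a by (cases a) auto
  have "Suc c < 3 ^ c + 1" using lt3[of c] by simp
  moreover have "3 ^ c + 1 < (3::nat) ^ Suc c" using lt3[of c] by simp
  ultimately show ?thesis using True c by simp
next
  case False
  assume a: "a \<ge> 1"
  have A: "(3::nat) \<le> 3 ^ a" using a by (rule ge3)
  have B: "(3::nat) \<le> 3 ^ b" using False by (intro ge3) simp
  have "(3::nat) ^ (a + b) = 3 ^ a * 3 ^ b" by (simp add: power_add)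
  moreover have "3 ^ a * 3 ^ b \<ge> (3::nat) ^ a + 3 ^ b + 1"
  proof -
    define x :: nat where "x = 3 ^ a - 3"
    define y :: nat where "y = 3 ^ b - 3"
    have "3 ^ a = x + 3" "3 ^ b = y + 3" using A B unfolding x_def y_def by simp_all
    then show ?thesis by (simp add: algebra_simps)
  qed
  ultimately show ?thesis using lt3[of a] by linarith
qed

lemma step_dec: "clean_step G G' \<Longrightarrow> W G' < W G"
proof (induction rule: clean_step.induct)
  case (extrude I V G D)
  have "wt I + 3 ^ W G < 3 ^ (wt I + W G)" using key wt_pos by blast
  then show ?case by (simp add: W_def)
next
  case (empty_br V D)
  then show ?case by (simp add: W_def)
next
  case (contract I D)
  then show ?case using wt_pos[of I] by (simp add: W_def)
next
  case (inside G G' V D)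
  then show ?case by (simp add: W_def)
qed

theorem proposition2:
  shows "\<not> (\<exists>f :: nat \<Rightarrow> ('v, 'f, 'p) ctx. \<forall>i. clean_step (f i) (f (Suc i)))"
proof
  assume "\<exists>f :: nat \<Rightarrow> ('v, 'f, 'p) ctx. \<forall>i. clean_step (f i) (f (Suc i))"
  then obtain f :: "nat \<Rightarrow> ('v, 'f, 'p) ctx" where f: "\<And>i. clean_step (f i) (f (Suc i))" by blast
  have "W (f i) + i \<le> W (f 0)" for i
  proof (induction i)
    case (Suc i)
    then show ?case using step_dec[OF f[of i]] by simp
  qed simp
  from this[of "Suc (W (f 0))"] show False by simp
qed

end
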